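(* There exist absolute constants $0<c\le C$ such that the following holds. Let $d\ge 1$, $n\ge3$, $m\ge1$ be integers and $0<r\le 1/(2d)$, let $\mathcal{L}$ be the FTCS operator with parameter $r$, and let $A$ be the $mn^d\times mn^d$ block matrix consisting of $m\times m$ blocks of size $n^d\times n^d$, with identity blocks $I$ on the block diagonal, blocks $-\mathcal{L}$ on the block sub-diagonal, and zero blocks elsewhere. Then $c\le\|A\|\le C$ and $c\,m\le\|A^{-1}\|\le C\,m$. In particular the condition number $\|A\|\|A^{-1}\|$ of $A$ is $\Theta(m)$.
   Context: The FTCS operator with parameter $r$ on $\mathbb{R}^{\mathbb{Z}_n^d}$ is $\mathcal{L}=I_n^{\otimes d}+r\sum_{j=1}^d I_n^{\otimes(j-1)}\otimes H\otimes I_n^{\otimes(d-j)}$, where $H$ is the $n\times n$ circulant matrix with $-2$ on the diagonal, $1$ on the super- and sub-diagonal, and $1$ in the corner entries $(1,n)$ and $(n,1)$; equivalently $(\mathcal{L}v)(\mathbf{k})=(1-2dr)v(\mathbf{k})+r\sum_{i=1}^d(v(\mathbf{k}+\mathbf{e}_i)+v(\mathbf{k}-\mathbf{e}_i))$ with indices mod $n$. $\|\cdot\|$ denotes the operator (spectral) norm. *)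

theory Defs
  imports Complex_Main
begin

text \<open>The discrete torus Z_n^d, represented as index functions k :: nat => nat with
  k i < n for i < d and k i = 0 for i >= d.\<close>
definition grid :: "nat \<Rightarrow> nat \<Rightarrow> (nat \<Rightarrow> nat) set" where
  "grid d n = {k. (\<forall>i<d. k i < n) \<and> (\<forall>i\<ge>d. k i = 0)}"

definition FTCS :: "nat \<Rightarrow> nat \<Rightarrow> real \<Rightarrow> ((nat \<Rightarrow> nat) \<Rightarrow> real) \<Rightarrow> (nat \<Rightarrow> nat) \<Rightarrow> real" where
  "FTCS d n r v k = (1 - 2 * real d * r) * v k
     + r * (\<Sum>i<d. v (k(i := (k i + 1) mod n)) + v (k(i := (k i + n - 1) mod n)))"

definition blockidx :: "nat \<Rightarrow> nat \<Rightarrow> nat \<Rightarrow> (nat \<times> (nat \<Rightarrow> nat)) set" where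
  "blockidx m d n = {..<m} \<times> grid d n"

definition blockA :: "nat \<Rightarrow> nat \<Rightarrow> real \<Rightarrow>
    (nat \<times> (nat \<Rightarrow> nat) \<Rightarrow> real) \<Rightarrow> nat \<times> (nat \<Rightarrow> nat) \<Rightarrow> real" where
  "blockA d n r x p = x p - (if fst p > 0 then FTCS d n r (\<lambda>k. x (fst p - 1, k)) (snd p) else 0)"

text \<open>Vectors in R^S: real functions vanishing outside the finite index set S.\<close>
definition vecs :: "'a set \<Rightarrow> ('a \<Rightarrow> real) set" where
  "vecs S = {x. \<forall>p. p \<notin> S \<longrightarrow> x p = 0}"

definition vnorm :: "'a set \<Rightarrow> ('a \<Rightarrow> real) \<Rightarrow> real" where
  "vnorm S x = sqrt (\<Sum>p\<in>S. (x p)^2)"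

definition restr :: "'a set \<Rightarrow> ('a \<Rightarrow> real) \<Rightarrow> 'a \<Rightarrow> real" where
  "restr S x p = (if p \<in> S then x p else 0)"

definition opnorm :: "'a set \<Rightarrow> (('a \<Rightarrow> real) \<Rightarrow> ('a \<Rightarrow> real)) \<Rightarrow> real" where
  "opnorm S T = Sup ((\<lambda>x. vnorm S (T x) / vnorm S x) ` {x \<in> vecs S. x \<noteq> (\<lambda>_. 0)})"

definition invertible_on :: "'a set \<Rightarrow> (('a \<Rightarrow> real) \<Rightarrow> ('a \<Rightarrow> real)) \<Rightarrow> bool" where
  "invertible_on S T = (\<forall>y\<in>vecs S. \<exists>!x. x \<in> vecs S \<and> restr S (T x) = y)"

definition inv_on :: "'a set \<Rightarrow> (('a \<Rightarrow> real) \<Rightarrow> ('a \<Rightarrow> real)) \<Rightarrow> ('a \<Rightarrow> real) \<Rightarrow> 'a \<Rightarrow> real" where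
  "inv_on S T y = (THE x. x \<in> vecs S \<and> restr S (T x) = restr S y)"

end

theory Submission imports Defs "HOL-Analysis.Analysis" begin

lemma grid_finite: "finite (grid d n)"
proof -
  have "grid d n \<subseteq> (\<lambda>xs i. if i < d then xs ! i else 0) ` {xs. set xs \<subseteq> {..<n} \<and> length xs = d}"
  proof
    fix k assume k: "k \<in> grid d n"
    then have "k = (\<lambda>i. if i<d then map k [0..<d] ! i else 0)" by (auto simp: grid_def fun_eq_iff)
    moreover have "map k [0..<d] \<in> {xs. set xs \<subseteq> {..<n} \<and> length xs = d}" using k by (auto simp: grid_def)
    ultimately show "k \<in> (\<lambda>xs i. if i < d then xs ! i else 0) ` {xs. set xs \<subseteq> {..<n} \<and> length xs = d}" by blast
  qed
  then show ?thesis by (rule finite_subset) (auto intro: finite_lists_length_eq)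
qed

lemma zero_grid: "0 < n \<Longrightarrow> (\<lambda>_. 0) \<in> grid d n"
  by (simp add: grid_def)
lemma up_grid: assumes k: "k \<in> grid d n" and i: "i < d" and n: "0 < n" shows "k(i := (k i + 1) mod n) \<in> grid d n"
  unfolding grid_def
proof (intro CollectI conjI allI impI)
  fix j assume "j < d" then show "(k(i := (k i + 1) mod n)) j < n" using k n by (simp add: grid_def)
next
  fix j assume "d \<le> j" then show "(k(i := (k i + 1) mod n)) j = 0" using k i by (simp add: grid_def)
qed
lemma dn_grid: assumes k: "k \<in> grid d n" and i: "i < d" and n: "0 < n" shows "k(i := (k i + n - 1) mod n) \<in> grid d n"
  unfolding grid_def
proof (intro CollectI conjI allI impI)
  fix j assume "j < d" then show "(k(i := (k i + n - 1) mod n)) j < n" using k n by (simp add: grid_def)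
next
  fix j assume "d \<le> j" then show "(k(i := (k i + n - 1) mod n)) j = 0" using k i by (simp add: grid_def)
qed

lemma mod_aux1: "(a::nat) < n \<Longrightarrow> ((a + 1) mod n + n - 1) mod n = a"
proof (cases "a + 1 < n")
  case True
  then have "(a + 1) mod n + n - 1 = a + n" by simp
  then show ?thesis using True by simp
next
  case False
  assume "a < n"
  then have "n = Suc a" using False by simp
  then show ?thesis by simp
qed
lemma mod_aux2: assumes a: "(a::nat) < n" shows "((a + n - 1) mod n + 1) mod n = a"
proof (cases a)
  case 0
  then obtain n' where n: "n = Suc n'" using a by (cases n) auto
  show ?thesis unfolding 0 n by simp
next
  case (Suc a')
  then have "a + n - 1 = a' + n" by simp
  moreover have "(a' + n) mod n = a'" using a Suc by simp
  ultimately show ?thesis using a Suc by simp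
qed

lemma bij_up: assumes "i < d" "0 < n"
  shows "bij_betw (\<lambda>k. k(i := (k i + 1) mod n)) (grid d n) (grid d n)"
proof (rule bij_betwI[where g = "\<lambda>k. k(i := (k i + n - 1) mod n)"])
  show "(\<lambda>k. k(i := (k i + 1) mod n)) \<in> grid d n \<rightarrow> grid d n" using up_grid assms by blast
  show "(\<lambda>k. k(i := (k i + n - 1) mod n)) \<in> grid d n \<rightarrow> grid d n" using dn_grid assms by blast
  fix k assume k: "k \<in> grid d n"
  then have "k i < n" using assms by (auto simp: grid_def)
  then show "(k(i := (k i + 1) mod n))(i := ((k(i := (k i + 1) mod n)) i + n - 1) mod n) = k"
    using mod_aux1[of "k i" n] by (simp add: fun_eq_iff)
next
  fix k assume k: "k \<in> grid d n"
  then have "k i < n" using assms by (auto simp: grid_def)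
  then show "(k(i := (k i + n - 1) mod n))(i := ((k(i := (k i + n - 1) mod n)) i + 1) mod n) = k"
    using mod_aux2[of "k i" n] by (simp add: fun_eq_iff)
qed

lemma bij_dn: assumes "i < d" "0 < n"
  shows "bij_betw (\<lambda>k. k(i := (k i + n - 1) mod n)) (grid d n) (grid d n)"
proof (rule bij_betwI[where g = "\<lambda>k. k(i := (k i + 1) mod n)"])
  show "(\<lambda>k. k(i := (k i + 1) mod n)) \<in> grid d n \<rightarrow> grid d n" using up_grid assms by blast
  show "(\<lambda>k. k(i := (k i + n - 1) mod n)) \<in> grid d n \<rightarrow> grid d n" using dn_grid assms by blast
  fix k assume k: "k \<in> grid d n"
  then have "k i < n" using assms by (auto simp: grid_def)
  then show "(k(i := (k i + n - 1) mod n))(i := ((k(i := (k i + n - 1) mod n)) i + 1) mod n) = k"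
    using mod_aux2[of "k i" n] by (simp add: fun_eq_iff)
next
  fix k assume k: "k \<in> grid d n"
  then have "k i < n" using assms by (auto simp: grid_def)
  then show "(k(i := (k i + 1) mod n))(i := ((k(i := (k i + 1) mod n)) i + n - 1) mod n) = k"
    using mod_aux1[of "k i" n] by (simp add: fun_eq_iff)
qed

lemma sq_sum_le: "((p::real) + q)^2 \<le> 2 * (p^2 + q^2)"
proof -
  have "0 \<le> (p - q)^2" by simp
  then show ?thesis by (simp add: power2_eq_square algebra_simps)
qed

lemma conv_sq: assumes "0 \<le> a" "0 \<le> b" "a + b = 1"
  shows "(a * x + b * y)^2 \<le> a * x^2 + b * (y::real)^2"
proof -
  have bb: "b = 1 - a" using assms(3) by simp
  have "a * x^2 + b * y^2 - (a * x + b * y)^2 = a * b * (x - y)^2"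
    unfolding bb by (simp add: power2_eq_square algebra_simps)
  moreover have "0 \<le> a * b * (x - y)^2" using assms by simp
  ultimately show ?thesis by linarith
qed

lemma ftcs_sq:
  assumes d: "1 \<le> d" and r: "0 < r" "r \<le> 1 / (2 * real d)"
  shows "(FTCS d n r v k)^2 \<le> (1 - 2 * real d * r) * (v k)^2
     + r * (\<Sum>i<d. (v (k(i := (k i + 1) mod n)))^2 + (v (k(i := (k i + n - 1) mod n)))^2)"
proof -
  define T where "T = (\<Sum>i<d. v (k(i := (k i + 1) mod n)) + v (k(i := (k i + n - 1) mod n)))"
  define Q where "Q = (\<Sum>i<d. (v (k(i := (k i + 1) mod n)))^2 + (v (k(i := (k i + n - 1) mod n)))^2)"
  have dpos: "0 < real d" using d by simp
  have T2: "T^2 \<le> 2 * real d * Q"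
  proof -
    have "T^2 \<le> (\<Sum>i<d. (v (k(i := (k i + 1) mod n)) + v (k(i := (k i + n - 1) mod n)))^2) * real d"
      unfolding T_def using sum_squared_le_sum_of_squares[of _ "{..<d}"] by simp
    also have "\<dots> \<le> (2 * Q) * real d"
      unfolding Q_def sum_distrib_left
      by (rule mult_right_mono[OF sum_mono[OF sq_sum_le]]) simp
    finally show ?thesis by (simp add: algebra_simps)
  qed
  have b: "2 * real d * r \<le> 1" using r dpos by (simp add: field_simps)
  have TQ: "T^2 / (2 * real d) \<le> Q" using T2 dpos by (simp add: pos_divide_le_eq algebra_simps)
  have "(FTCS d n r v k)^2 = ((1 - 2 * real d * r) * v k + (2 * real d * r) * (T / (2 * real d)))^2"
    unfolding FTCS_def T_def using dpos by simp
  also have "\<dots> \<le> (1 - 2 * real d * r) * (v k)^2 + (2 * real d * r) * (T / (2 * real d))^2"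
    by (rule conv_sq) (use b r in auto)
  also have "\<dots> = (1 - 2 * real d * r) * (v k)^2 + r * (T^2 / (2 * real d))"
    using dpos by (simp add: power2_eq_square field_simps)
  also have "\<dots> \<le> (1 - 2 * real d * r) * (v k)^2 + r * Q"
    using TQ r by (intro add_left_mono mult_left_mono) auto
  finally show ?thesis unfolding Q_def .
qed

lemma ftcs_norm:
  assumes d: "1 \<le> d" and r: "0 < r" "r \<le> 1/(2*real d)" and n: "0 < n"
  shows "(\<Sum>k\<in>grid d n. (FTCS d n r v k)^2) \<le> (\<Sum>k\<in>grid d n. (v k)^2)"
proof -
  let ?G = "grid d n"
  have "(\<Sum>k\<in>?G. (FTCS d n r v k)^2) \<le> (\<Sum>k\<in>?G. (1 - 2*real d*r) * (v k)^2 + r * (\<Sum>i<d. (v (k(i := (k i + 1) mod n)))^2 + (v (k(i := (k i + n - 1) mod n)))^2))"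
    by (rule sum_mono) (rule ftcs_sq[OF d r])
  also have "\<dots> = (1 - 2*real d*r) * (\<Sum>k\<in>?G. (v k)^2) + r * (\<Sum>i<d. (\<Sum>k\<in>?G. (v (k(i := (k i + 1) mod n)))^2) + (\<Sum>k\<in>?G. (v (k(i := (k i + n - 1) mod n)))^2))"
  proof -
    have e1: "(\<Sum>k\<in>?G. r * (\<Sum>i<d. (v (k(i := (k i + 1) mod n)))^2 + (v (k(i := (k i + n - 1) mod n)))^2))
       = r * (\<Sum>k\<in>?G. \<Sum>i<d. (v (k(i := (k i + 1) mod n)))^2 + (v (k(i := (k i + n - 1) mod n)))^2)"
      by (simp only: sum_distrib_left)
    have e2: "(\<Sum>k\<in>?G. \<Sum>i<d. (v (k(i := (k i + 1) mod n)))^2 + (v (k(i := (k i + n - 1) mod n)))^2)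
       = (\<Sum>i<d. \<Sum>k\<in>?G. (v (k(i := (k i + 1) mod n)))^2 + (v (k(i := (k i + n - 1) mod n)))^2)"
      by (rule sum.swap)
    have e3: "(\<Sum>k\<in>?G. (1 - 2*real d*r) * (v k)^2) = (1 - 2*real d*r) * (\<Sum>k\<in>?G. (v k)^2)"
      by (simp only: sum_distrib_left)
    show ?thesis
      unfolding sum.distrib[of "\<lambda>k. (1 - 2*real d*r) * (v k)^2"] e1 e2 e3
      by (simp only: sum.distrib)
  qed
  also have "\<dots> = (1 - 2*real d*r) * (\<Sum>k\<in>?G. (v k)^2) + r * (\<Sum>i<d. 2 * (\<Sum>k\<in>?G. (v k)^2))"
  proof -
    have "(\<Sum>k\<in>?G. (v (k(i := (k i + 1) mod n)))^2) + (\<Sum>k\<in>?G. (v (k(i := (k i + n - 1) mod n)))^2) = 2 * (\<Sum>k\<in>?G. (v k)^2)"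
      if i: "i < d" for i
    proof -
      have 1: "(\<Sum>k\<in>?G. (v (k(i := (k i + 1) mod n)))^2) = (\<Sum>k\<in>?G. (v k)^2)"
        using sum.reindex_bij_betw[OF bij_up[OF i n], of "\<lambda>k. (v k)^2"] .
      have 2: "(\<Sum>k\<in>?G. (v (k(i := (k i + n - 1) mod n)))^2) = (\<Sum>k\<in>?G. (v k)^2)"
        using sum.reindex_bij_betw[OF bij_dn[OF i n], of "\<lambda>k. (v k)^2"] .
      show ?thesis using 1 2 by simp
    qed
    then show ?thesis by simp
  qed
  also have "\<dots> = (\<Sum>k\<in>?G. (v k)^2)"
    by (simp add: algebra_simps)
  finally show ?thesis .
qed

lemma L2_sq: "(L2_set f A)^2 = (\<Sum>i\<in>A. (f i)^2)"
  by (simp add: L2_set_def sum_nonneg)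

lemma vnorm_L2: "vnorm S x = L2_set x S"
  by (simp add: vnorm_def L2_set_def)

lemma sumS: "(\<Sum>p\<in>blockidx m d n. f p) = (\<Sum>j<m. \<Sum>k\<in>grid d n. f (j,k))"
  by (simp add: blockidx_def sum.cartesian_product)

lemma finite_S: "finite (blockidx m d n)"
  by (simp add: blockidx_def grid_finite)

lemma ratio_le: assumes "vnorm S y \<le> K * vnorm S x" "0 \<le> K"
  shows "vnorm S y / vnorm S x \<le> K"
proof (cases "vnorm S x = 0")
  case True then show ?thesis using assms by simp
next
  case False
  have "0 \<le> (\<Sum>p\<in>S. (x p)^2)" by (simp add: sum_nonneg)
  then have "0 < vnorm S x" using False by (simp add: vnorm_def)
  then show ?thesis using assms by (simp add: pos_divide_le_eq)
qed

lemma opnorm_le: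
  assumes "\<And>x. x \<in> vecs S \<Longrightarrow> vnorm S (T x) \<le> K * vnorm S x" "0 \<le> K" "S \<noteq> {}"
  shows "opnorm S T \<le> K"
  unfolding opnorm_def
proof (rule cSup_least)
  obtain p where "p \<in> S" using assms(3) by blast
  then have "(\<lambda>q. if q = p then 1 else 0) \<in> {x \<in> vecs S. x \<noteq> (\<lambda>_. 0)}"
    by (auto simp: vecs_def fun_eq_iff)
  then show "(\<lambda>x. vnorm S (T x) / vnorm S x) ` {x \<in> vecs S. x \<noteq> (\<lambda>_. 0)} \<noteq> {}" by blast
next
  fix t assume "t \<in> (\<lambda>x. vnorm S (T x) / vnorm S x) ` {x \<in> vecs S. x \<noteq> (\<lambda>_. 0)}"
  then show "t \<le> K" using assms ratio_le by blast
qed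

lemma opnorm_ge:
  assumes "\<And>x. x \<in> vecs S \<Longrightarrow> vnorm S (T x) \<le> K * vnorm S x" "0 \<le> K"
    and "x \<in> vecs S" "x \<noteq> (\<lambda>_. 0)"
  shows "vnorm S (T x) / vnorm S x \<le> opnorm S T"
  unfolding opnorm_def
proof (rule cSup_upper)
  show "vnorm S (T x) / vnorm S x \<in> (\<lambda>x. vnorm S (T x) / vnorm S x) ` {x \<in> vecs S. x \<noteq> (\<lambda>_. 0)}"
    using assms by blast
  show "bdd_above ((\<lambda>x. vnorm S (T x) / vnorm S x) ` {x \<in> vecs S. x \<noteq> (\<lambda>_. 0)})"
    using assms(1,2) ratio_le by (intro bdd_aboveI[where M = K]) blast
qed

lemma shift_sum: assumes "\<And>j. 0 \<le> g j"
  shows "(\<Sum>j<m. if 0 < j then g (j-1) else 0) \<le> (\<Sum>j<m. g (j::nat)::real)"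
proof (cases m)
  case 0 then show ?thesis by simp
next
  case (Suc m')
  have "(\<Sum>j<m. if 0 < j then g (j-1) else 0) = (\<Sum>j<m'. g j)"
    unfolding Suc sum.lessThan_Suc_shift by simp
  also have "\<dots> \<le> (\<Sum>j<m. g j)" unfolding Suc using assms by simp
  finally show ?thesis .
qed

lemma blockA_eq: "blockA d n r x (j,k) = x (j,k) - (if 0 < j then FTCS d n r (\<lambda>k. x (j-1,k)) k else 0)"
  by (simp add: blockA_def)

lemma A_bound:
  assumes d: "1 \<le> d" and r: "0 < r" "r \<le> 1/(2*real d)" and n: "0 < n"
  shows "vnorm (blockidx m d n) (blockA d n r x) \<le> 2 * vnorm (blockidx m d n) x"
proof -
  let ?G = "grid d n"
  define h where "h = (\<lambda>j k. if 0 < j then FTCS d n r (\<lambda>k. x (j - 1, k)) k else 0)"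
  have "(vnorm (blockidx m d n) (blockA d n r x))^2 = (\<Sum>j<m. \<Sum>k\<in>?G. (x (j,k) - h j k)^2)"
    unfolding vnorm_L2 L2_sq sumS blockA_eq h_def ..
  also have "\<dots> \<le> (\<Sum>j<m. \<Sum>k\<in>?G. 2 * ((x (j,k))^2 + (h j k)^2))"
    using sq_sum_le[of "x (_,_)" "- h _ _"] by (intro sum_mono) simp
  also have "\<dots> = 2 * (\<Sum>j<m. \<Sum>k\<in>?G. (x (j,k))^2) + 2 * (\<Sum>j<m. \<Sum>k\<in>?G. (h j k)^2)"
    by (simp add: sum.distrib sum_distrib_left)
  also have "(\<Sum>j<m. \<Sum>k\<in>?G. (h j k)^2) \<le> (\<Sum>j<m. if 0 < j then (\<Sum>k\<in>?G. (x (j-1,k))^2) else 0)"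
    unfolding h_def by (intro sum_mono) (auto intro: ftcs_norm[OF d r n])
  also have "\<dots> \<le> (\<Sum>j<m. \<Sum>k\<in>?G. (x (j,k))^2)"
    by (rule shift_sum[where g = "\<lambda>j. \<Sum>k\<in>?G. (x (j,k))^2"]) (simp add: sum_nonneg)
  finally have "(vnorm (blockidx m d n) (blockA d n r x))^2 \<le> (2 * vnorm (blockidx m d n) x)^2"
    by (simp add: vnorm_L2 L2_sq sumS power_mult_distrib)
  then show ?thesis
    by (rule power2_le_imp_le) (simp add: vnorm_def sum_nonneg)
qed


primrec sol :: "nat \<Rightarrow> nat \<Rightarrow> real \<Rightarrow> (nat \<times> (nat \<Rightarrow> nat) \<Rightarrow> real) \<Rightarrow> nat \<Rightarrow> (nat \<Rightarrow> nat) \<Rightarrow> real" where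
  "sol d n r y 0 = (\<lambda>k. if k \<in> grid d n then y (0,k) else 0)"
| "sol d n r y (Suc j) = (\<lambda>k. if k \<in> grid d n then y (Suc j, k) + FTCS d n r (sol d n r y j) k else 0)"

definition solx where "solx m d n r y = (\<lambda>p. if p \<in> blockidx m d n then sol d n r y (fst p) (snd p) else 0)"

lemma sol_out: "k \<notin> grid d n \<Longrightarrow> sol d n r y j k = 0"
  by (cases j) auto

lemma solx_vecs: "solx m d n r y \<in> vecs (blockidx m d n)"
  by (simp add: solx_def vecs_def)

lemma solx_blk: "j < m \<Longrightarrow> (\<lambda>k. solx m d n r y (j, k)) = sol d n r y j"
  by (auto simp: solx_def blockidx_def fun_eq_iff sol_out)

lemma restr_vecs: "y \<in> vecs S \<Longrightarrow> restr S y = y"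
  by (auto simp: restr_def vecs_def fun_eq_iff)

lemma solx_solves: "restr (blockidx m d n) (blockA d n r (solx m d n r y)) = restr (blockidx m d n) y"
proof
  fix p
  show "restr (blockidx m d n) (blockA d n r (solx m d n r y)) p = restr (blockidx m d n) y p"
  proof (cases "p \<in> blockidx m d n")
    case False then show ?thesis by (simp add: restr_def)
  next
    case True
    obtain j k where p: "p = (j,k)" by (cases p)
    have jm: "j < m" and kG: "k \<in> grid d n" using True p by (auto simp: blockidx_def)
    show ?thesis
    proof (cases j)
      case 0 then show ?thesis using True p kG by (simp add: restr_def blockA_eq solx_def)
    next
      case (Suc j')
      have "(\<lambda>k. solx m d n r y (j', k)) = sol d n r y j'"
        using solx_blk[of j' m] jm Suc by simp
      then have "blockA d n r (solx m d n r y) (j,k) = solx m d n r y (j,k) - FTCS d n r (sol d n r y j') k"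
        using Suc by (simp add: blockA_eq)
      also have "solx m d n r y (j,k) = sol d n r y j k" using True p by (simp add: solx_def)
      also have "sol d n r y j k = y (j,k) + FTCS d n r (sol d n r y j') k" using Suc kG by simp
      finally show ?thesis using True p by (simp add: restr_def)
    qed
  qed
qed

lemma sol_unique:
  assumes x: "x \<in> vecs (blockidx m d n)" and x': "x' \<in> vecs (blockidx m d n)"
    and eq: "restr (blockidx m d n) (blockA d n r x) = restr (blockidx m d n) (blockA d n r x')"
  shows "x = x'"
proof -
  have "\<forall>k. x (j,k) = x' (j,k)" for j
  proof (induction j rule: nat_less_induct)
    case (1 j)
    show ?case
    proof
      fix k
      show "x (j,k) = x' (j,k)"
      proof (cases "(j,k) \<in> blockidx m d n")
        case False then show ?thesis using x x' by (simp add: vecs_def)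
      next
        case True
        have e: "blockA d n r x (j,k) = blockA d n r x' (j,k)"
          using fun_cong[OF eq, of "(j,k)"] True by (simp add: restr_def)
        show ?thesis
        proof (cases j)
          case 0 then show ?thesis using e by (simp add: blockA_eq)
        next
          case (Suc j')
          have "(\<lambda>k. x (j', k)) = (\<lambda>k. x' (j', k))" using 1 Suc by auto
          then show ?thesis using e Suc by (simp add: blockA_eq)
        qed
      qed
    qed
  qed
  then show ?thesis by (auto simp: fun_eq_iff)
qed

lemma invertible: "invertible_on (blockidx m d n) (blockA d n r)"
  unfolding invertible_on_def
proof
  fix y assume y: "y \<in> vecs (blockidx m d n)"
  show "\<exists>!x. x \<in> vecs (blockidx m d n) \<and> restr (blockidx m d n) (blockA d n r x) = y"
  proof (rule ex1I[where a = "solx m d n r y"])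
    show "solx m d n r y \<in> vecs (blockidx m d n) \<and> restr (blockidx m d n) (blockA d n r (solx m d n r y)) = y"
      using solx_vecs solx_solves restr_vecs[OF y] by simp
  next
    fix x assume "x \<in> vecs (blockidx m d n) \<and> restr (blockidx m d n) (blockA d n r x) = y"
    then show "x = solx m d n r y"
      using sol_unique[of x m d n "solx m d n r y" r] solx_vecs solx_solves restr_vecs[OF y] by simp
  qed
qed

lemma inv_eq: "y \<in> vecs (blockidx m d n) \<Longrightarrow> inv_on (blockidx m d n) (blockA d n r) y = solx m d n r y"
  unfolding inv_on_def
proof (rule the_equality)
  show "solx m d n r y \<in> vecs (blockidx m d n) \<and> restr (blockidx m d n) (blockA d n r (solx m d n r y)) = restr (blockidx m d n) y"
    using solx_vecs solx_solves by simp
next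
  fix x assume "x \<in> vecs (blockidx m d n) \<and> restr (blockidx m d n) (blockA d n r x) = restr (blockidx m d n) y"
  then show "x = solx m d n r y"
    using sol_unique[of x m d n "solx m d n r y" r] solx_vecs solx_solves by simp
qed


lemma ftcs_L2:
  assumes d: "1 \<le> d" and r: "0 < r" "r \<le> 1/(2*real d)" and n: "0 < n"
  shows "L2_set (FTCS d n r v) (grid d n) \<le> L2_set v (grid d n)"
  unfolding L2_set_def by (rule real_sqrt_le_mono) (rule ftcs_norm[OF d r n])

lemma sol_L2:
  assumes d: "1 \<le> d" and r: "0 < r" "r \<le> 1/(2*real d)" and n: "0 < n"
  shows "L2_set (sol d n r y j) (grid d n) \<le> (\<Sum>i<Suc j. L2_set (\<lambda>k. y (i,k)) (grid d n))"
proof (induction j)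
  case 0
  have "L2_set (sol d n r y 0) (grid d n) = L2_set (\<lambda>k. y (0,k)) (grid d n)"
    by (rule L2_set_cong) auto
  then show ?case by simp
next
  case (Suc j)
  have "L2_set (sol d n r y (Suc j)) (grid d n) = L2_set (\<lambda>k. y (Suc j,k) + FTCS d n r (sol d n r y j) k) (grid d n)"
    by (rule L2_set_cong) auto
  also have "\<dots> \<le> L2_set (\<lambda>k. y (Suc j,k)) (grid d n) + L2_set (FTCS d n r (sol d n r y j)) (grid d n)"
    by (rule L2_set_triangle_ineq)
  also have "\<dots> \<le> L2_set (\<lambda>k. y (Suc j,k)) (grid d n) + L2_set (sol d n r y j) (grid d n)"
    using ftcs_L2[OF d r n] by simp
  also have "\<dots> \<le> L2_set (\<lambda>k. y (Suc j,k)) (grid d n) + (\<Sum>i<Suc j. L2_set (\<lambda>k. y (i,k)) (grid d n))"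
    using Suc by simp
  also have "\<dots> = (\<Sum>i<Suc (Suc j). L2_set (\<lambda>k. y (i,k)) (grid d n))"
    by simp
  finally show ?case .
qed

lemma vnorm_blocks: "vnorm (blockidx m d n) x = sqrt (\<Sum>j<m. (L2_set (\<lambda>k. x (j,k)) (grid d n))^2)"
  by (simp add: vnorm_def sumS L2_sq)

lemma inv_bound:
  assumes d: "1 \<le> d" and r: "0 < r" "r \<le> 1/(2*real d)" and n: "0 < n"
  shows "vnorm (blockidx m d n) (solx m d n r y) \<le> real m * vnorm (blockidx m d n) y"
proof -
  let ?G = "grid d n"
  define Y where "Y = (\<lambda>i. L2_set (\<lambda>k. y (i,k)) ?G)"
  define W where "W = (\<Sum>i<m. Y i)"
  define V where "V = vnorm (blockidx m d n) y"
  have Ynn: "0 \<le> Y i" for i by (simp add: Y_def)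
  have Wnn: "0 \<le> W" unfolding W_def using Ynn by (simp add: sum_nonneg)
  have Vnn: "0 \<le> V" by (simp add: V_def vnorm_def sum_nonneg)
  have V: "V = L2_set Y {..<m}"
    by (simp add: V_def vnorm_blocks Y_def L2_set_def)
  have "W = (\<Sum>i<m. \<bar>Y i\<bar> * \<bar>1\<bar>)" using Ynn by (simp add: W_def)
  also have "\<dots> \<le> L2_set Y {..<m} * L2_set (\<lambda>_. 1) {..<m}"
    by (rule L2_set_mult_ineq)
  also have "\<dots> = V * sqrt (real m)" by (simp add: V L2_set_constant)
  finally have W: "W \<le> V * sqrt (real m)" .
  have blk: "L2_set (\<lambda>k. solx m d n r y (j,k)) ?G \<le> W" if j: "j < m" for j
  proof -
    have "L2_set (\<lambda>k. solx m d n r y (j,k)) ?G = L2_set (sol d n r y j) ?G"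
      using solx_blk[OF j] by simp
    also have "\<dots> \<le> (\<Sum>i<Suc j. Y i)" unfolding Y_def by (rule sol_L2[OF d r n])
    also have "\<dots> \<le> W" unfolding W_def
      by (rule sum_mono2) (use j Ynn in auto)
    finally show ?thesis .
  qed
  have "(\<Sum>j<m. (L2_set (\<lambda>k. solx m d n r y (j,k)) ?G)^2) \<le> (\<Sum>j<m. W^2)"
    by (rule sum_mono) (use blk in \<open>auto intro: power_mono\<close>)
  also have "\<dots> = real m * W^2" by simp
  also have "\<dots> \<le> real m * (V * sqrt (real m))^2"
    using W Wnn by (intro mult_left_mono power_mono) auto
  also have "\<dots> = (real m * V)^2" by (simp add: power_mult_distrib power2_eq_square)
  finally have "(vnorm (blockidx m d n) (solx m d n r y))^2 \<le> (real m * V)^2"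
    by (simp add: vnorm_blocks sum_nonneg)
  then show ?thesis unfolding V_def[symmetric]
    by (rule power2_le_imp_le) (use Vnn in simp)
qed

lemma ftcs_const:
  assumes k: "k \<in> grid d n" and n: "0 < n" and v: "\<And>k'. k' \<in> grid d n \<Longrightarrow> v k' = c"
  shows "FTCS d n r v k = c"
proof -
  have "(\<Sum>i<d. v (k(i := (k i + 1) mod n)) + v (k(i := (k i + n - 1) mod n))) = (\<Sum>i<d. 2 * c)"
  proof (rule sum.cong)
    fix i assume "i \<in> {..<d}"
    then have i: "i < d" by simp
    show "v (k(i := (k i + 1) mod n)) + v (k(i := (k i + n - 1) mod n)) = 2 * c"
      using v[OF up_grid[OF k i n]] v[OF dn_grid[OF k i n]] by simp
  qed simp
  then show ?thesis unfolding FTCS_def using v[OF k] by (simp add: algebra_simps)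
qed

lemma sol_ones:
  assumes n: "0 < n" and j: "j < m" and k: "k \<in> grid d n"
  shows "sol d n r (\<lambda>p. if p \<in> blockidx m d n then 1 else 0) j k = real j + 1"
  using j k
proof (induction j arbitrary: k)
  case 0 then show ?case by (simp add: blockidx_def)
next
  case (Suc j)
  have "FTCS d n r (sol d n r (\<lambda>p. if p \<in> blockidx m d n then 1 else 0) j) k = real j + 1"
    by (rule ftcs_const[OF Suc.prems(2) n]) (use Suc in auto)
  then show ?case using Suc.prems by (simp add: blockidx_def)
qed

lemma sumsq: "real m ^ 3 / 3 \<le> (\<Sum>j<m. (real j + 1)^2)"
proof (induction m)
  case 0 then show ?case by simp
next
  case (Suc m)
  have "real (Suc m) ^ 3 / 3 = real m ^ 3 / 3 + (real m ^ 2 + real m + 1/3)"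
    by (simp add: power3_eq_cube power2_eq_square algebra_simps add_divide_distrib)
  also have "\<dots> \<le> (\<Sum>j<m. (real j + 1)^2) + (real m + 1)^2"
    using Suc by (simp add: power2_eq_square algebra_simps)
  finally show ?case by simp
qed


lemma nonempty_S: "0 < m \<Longrightarrow> 0 < n \<Longrightarrow> blockidx m d n \<noteq> {}"
  using zero_grid[of n d] by (auto simp: blockidx_def)

lemma A_lower:
  assumes d: "1 \<le> d" and r: "0 < r" "r \<le> 1/(2*real d)" and n: "0 < n" and m: "0 < m"
  shows "1 \<le> opnorm (blockidx m d n) (blockA d n r)"
proof -
  let ?S = "blockidx m d n"
  define x where "x = (\<lambda>p. if p \<in> ?S \<and> fst p = m - 1 then 1 else (0::real))"
  have p0: "(m - 1, \<lambda>_. 0) \<in> ?S" using m zero_grid[OF n] by (auto simp: blockidx_def)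
  have xv: "x \<in> vecs ?S" by (simp add: x_def vecs_def)
  have xnz: "x \<noteq> (\<lambda>_. 0)" using p0 by (auto simp: x_def fun_eq_iff)
  have Ax: "blockA d n r x p = x p" if p: "p \<in> ?S" for p
  proof -
    obtain j k where pj: "p = (j,k)" by (cases p)
    have jm: "j < m" using p pj by (simp add: blockidx_def)
    have "(\<lambda>k. x (j - 1, k)) = (\<lambda>_. 0)" if "0 < j"
      using that jm by (auto simp: x_def fun_eq_iff)
    then show ?thesis unfolding pj blockA_eq by (auto simp: FTCS_def)
  qed
  have eqn: "vnorm ?S (blockA d n r x) = vnorm ?S x"
    unfolding vnorm_def by (rule arg_cong[where f = sqrt], rule sum.cong) (auto simp: Ax)
  have "1 \<le> vnorm ?S x"
    using member_le_L2_set[OF finite_S p0, of x] p0 by (simp add: vnorm_L2 x_def)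
  then have "vnorm ?S (blockA d n r x) / vnorm ?S x = 1" using eqn by simp
  moreover have "vnorm ?S (blockA d n r x) / vnorm ?S x \<le> opnorm ?S (blockA d n r)"
    by (rule opnorm_ge[OF A_bound[OF d r n] _ xv xnz]) simp
  ultimately show ?thesis by simp
qed

lemma B_lower:
  assumes d: "1 \<le> d" and r: "0 < r" "r \<le> 1/(2*real d)" and n: "0 < n" and m: "0 < m"
  shows "real m / 2 \<le> opnorm (blockidx m d n) (inv_on (blockidx m d n) (blockA d n r))"
proof -
  let ?S = "blockidx m d n"
  let ?G = "grid d n"
  define y where "y = (\<lambda>p. if p \<in> ?S then 1 else (0::real))"
  have p0: "(m - 1, \<lambda>_. 0) \<in> ?S" using m zero_grid[OF n] by (auto simp: blockidx_def)
  have yv: "y \<in> vecs ?S" by (simp add: y_def vecs_def)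
  have ynz: "y \<noteq> (\<lambda>_. 0)" using p0 by (auto simp: y_def fun_eq_iff)
  have cG: "0 < card ?G" using zero_grid[OF n] grid_finite card_gt_0_iff by blast
  have Bbound: "vnorm ?S (inv_on ?S (blockA d n r) z) \<le> (2 * real m) * vnorm ?S z" if "z \<in> vecs ?S" for z
  proof -
    have "vnorm ?S (inv_on ?S (blockA d n r) z) \<le> real m * vnorm ?S z"
      using inv_eq[OF that] inv_bound[OF d r n] by simp
    also have "\<dots> \<le> (2 * real m) * vnorm ?S z" by (simp add: vnorm_def sum_nonneg)
    finally show ?thesis .
  qed
  have Vy: "(vnorm ?S y)^2 = real m * real (card ?G)"
    by (simp add: vnorm_L2 L2_sq sumS y_def blockidx_def card_cartesian_product)
  have Vx: "(vnorm ?S (solx m d n r y))^2 = real (card ?G) * (\<Sum>j<m. (real j + 1)^2)"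
  proof -
    have "(vnorm ?S (solx m d n r y))^2 = (\<Sum>j<m. \<Sum>k\<in>?G. (solx m d n r y (j,k))^2)"
      by (simp add: vnorm_L2 L2_sq sumS)
    also have "\<dots> = (\<Sum>j<m. \<Sum>k\<in>?G. (real j + 1)^2)"
    proof (rule sum.cong[OF refl], rule sum.cong[OF refl])
      fix j k assume "j \<in> {..<m}" "k \<in> ?G"
      then show "(solx m d n r y (j,k))^2 = (real j + 1)^2"
        using sol_ones[OF n, where j=j and m=m and k=k and r=r and d=d] by (simp add: solx_def blockidx_def y_def)
    qed
    also have "\<dots> = real (card ?G) * (\<Sum>j<m. (real j + 1)^2)"
      by (simp add: sum_distrib_left)
    finally show ?thesis .
  qed
  have "(real m / 2 * vnorm ?S y)^2 \<le> (vnorm ?S (solx m d n r y))^2"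
  proof -
    have "(real m / 2 * vnorm ?S y)^2 = real (card ?G) * (real m ^ 3 / 4)"
      unfolding power_mult_distrib Vy by (simp add: power2_eq_square power3_eq_cube)
    also have "\<dots> \<le> real (card ?G) * (\<Sum>j<m. (real j + 1)^2)"
    proof (rule mult_left_mono)
      have "real m ^ 3 / 4 \<le> real m ^ 3 / 3" by (simp add: field_simps)
      then show "real m ^ 3 / 4 \<le> (\<Sum>j<m. (real j + 1)^2)" using sumsq[of m] by linarith
    qed simp
    finally show ?thesis using Vx by simp
  qed
  then have le: "real m / 2 * vnorm ?S y \<le> vnorm ?S (solx m d n r y)"
    by (rule power2_le_imp_le) (simp add: vnorm_def sum_nonneg)
  have sq: "0 < (vnorm ?S y)^2" unfolding Vy using cG m by simp
  have nn: "0 \<le> vnorm ?S y" by (simp add: vnorm_def sum_nonneg)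
  have ypos: "0 < vnorm ?S y" using sq nn by (simp add: order_less_le)
  have "real m / 2 \<le> vnorm ?S (solx m d n r y) / vnorm ?S y"
    using le ypos by (simp add: pos_le_divide_eq)
  also have "\<dots> = vnorm ?S (inv_on ?S (blockA d n r) y) / vnorm ?S y"
    using inv_eq[OF yv] by simp
  also have "\<dots> \<le> opnorm ?S (inv_on ?S (blockA d n r))"
    by (rule opnorm_ge[OF Bbound _ yv ynz]) simp_all
  finally show ?thesis .
qed

lemma A_upper:
  assumes d: "1 \<le> d" and r: "0 < r" "r \<le> 1/(2*real d)" and n: "0 < n" and m: "0 < m"
  shows "opnorm (blockidx m d n) (blockA d n r) \<le> 2"
proof (rule opnorm_le)
  fix x assume "x \<in> vecs (blockidx m d n)"
  show "vnorm (blockidx m d n) (blockA d n r x) \<le> 2 * vnorm (blockidx m d n) x"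
    by (rule A_bound[OF d r n])
qed (use nonempty_S[OF m n] in auto)

theorem mainTheorem3:
  shows "\<exists>c C :: real. 0 < c \<and> c \<le> C \<and>
    (\<forall>(d::nat) (n::nat) (m::nat) (r::real).
       1 \<le> d \<longrightarrow> 3 \<le> n \<longrightarrow> 1 \<le> m \<longrightarrow> 0 < r \<longrightarrow> r \<le> 1 / (2 * real d) \<longrightarrow>
       invertible_on (blockidx m d n) (blockA d n r) \<and>
       c \<le> opnorm (blockidx m d n) (blockA d n r) \<and>
       opnorm (blockidx m d n) (blockA d n r) \<le> C \<and>
       c * real m \<le> opnorm (blockidx m d n) (inv_on (blockidx m d n) (blockA d n r)) \<and>
       opnorm (blockidx m d n) (inv_on (blockidx m d n) (blockA d n r)) \<le> C * real m)"
proof (rule exI[of _ "1/2::real"], rule exI[of _ "2::real"], intro conjI allI impI)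
  fix d n m :: nat and r :: real
  assume d: "1 \<le> d" and n3: "3 \<le> n" and m1: "1 \<le> m" and r0: "0 < r" and r1: "r \<le> 1 / (2 * real d)"
  have n: "0 < n" using n3 by simp
  have m: "0 < m" using m1 by simp
  note r = r0 r1
  show "invertible_on (blockidx m d n) (blockA d n r)" by (rule invertible)
  show "1/2 \<le> opnorm (blockidx m d n) (blockA d n r)"
    using A_lower[OF d r n m] by simp
  show "opnorm (blockidx m d n) (blockA d n r) \<le> 2"
    by (rule A_upper[OF d r n m])
  show "1/2 * real m \<le> opnorm (blockidx m d n) (inv_on (blockidx m d n) (blockA d n r))"
    using B_lower[OF d r n m] by simp
  show "opnorm (blockidx m d n) (inv_on (blockidx m d n) (blockA d n r)) \<le> 2 * real m"
  proof (rule opnorm_le)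
    fix z assume z: "z \<in> vecs (blockidx m d n)"
    have "vnorm (blockidx m d n) (inv_on (blockidx m d n) (blockA d n r) z) \<le> real m * vnorm (blockidx m d n) z"
      using inv_eq[OF z] inv_bound[OF d r n] by simp
    also have "\<dots> \<le> (2 * real m) * vnorm (blockidx m d n) z" by (simp add: vnorm_def sum_nonneg)
    finally show "vnorm (blockidx m d n) (inv_on (blockidx m d n) (blockA d n r) z) \<le> 2 * real m * vnorm (blockidx m d n) z" .
  qed (use nonempty_S[OF m n] in auto)
qed simp_all

end
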